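(* Let $K$ be a perfect field with $\mathrm{char}(K)\neq 2$ and algebraic closure $K_a$. Let $f(t)\in K[t]$ be a separable irreducible polynomial of degree $7$ whose Galois group $\mathrm{Gal}(f)$ is either $\mathbf{S}_7$ or $\mathbf{A}_7$, and let $\mathfrak{R}_f\subset K_a$ be its set of $7$ roots. Then the $7$-element set $B_f=\{(\alpha^3:\alpha:1)\mid \alpha\in\mathfrak{R}_f\}\subset\mathbb{P}^2(K_a)$ is in general position, i.e. no three of its points lie on a line and no six of its points lie on a conic. *)

theory Defs
  imports "HOL-Computational_Algebra.Polynomial" "HOL-Combinatorics.Permutations"
begin

text \<open>The ambient type 'a plays the role of the algebraic closure K_a; the field K is a
  subfield K \<subseteq> UNIV over which 'a is algebraic.\<close>

definition is_subfield :: "'a::field set \<Rightarrow> bool" where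
  "is_subfield K \<longleftrightarrow> 0 \<in> K \<and> 1 \<in> K \<and>
     (\<forall>x\<in>K. \<forall>y\<in>K. x + y \<in> K \<and> x * y \<in> K) \<and>
     (\<forall>x\<in>K. - x \<in> K) \<and> (\<forall>x\<in>K. x \<noteq> 0 \<longrightarrow> inverse x \<in> K)"

definition poly_over :: "'a::field set \<Rightarrow> 'a poly \<Rightarrow> bool" where
  "poly_over K p \<longleftrightarrow> (\<forall>i. coeff p i \<in> K)"

definition algebraic_over :: "'a::field set \<Rightarrow> bool" where
  "algebraic_over K \<longleftrightarrow> (\<forall>x::'a. \<exists>p. p \<noteq> 0 \<and> poly_over K p \<and> poly p x = 0)"

definition perfect_subfield :: "'a::field set \<Rightarrow> bool" where
  "perfect_subfield K \<longleftrightarrow> CHAR('a) = 0 \<or> (\<forall>x\<in>K. \<exists>y\<in>K. y ^ CHAR('a) = x)"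

definition irreducible_over :: "'a::field set \<Rightarrow> 'a poly \<Rightarrow> bool" where
  "irreducible_over K f \<longleftrightarrow> poly_over K f \<and> degree f > 0 \<and>
     (\<forall>g h. poly_over K g \<and> poly_over K h \<and> f = g * h \<longrightarrow> degree g = 0 \<or> degree h = 0)"

definition separable_poly :: "'a::field poly \<Rightarrow> bool" where
  "separable_poly f \<longleftrightarrow> coprime f (pderiv f)"

definition field_aut :: "('a::field \<Rightarrow> 'a) \<Rightarrow> bool" where
  "field_aut \<sigma> \<longleftrightarrow> bij \<sigma> \<and> \<sigma> 1 = 1 \<and>
     (\<forall>x y. \<sigma> (x + y) = \<sigma> x + \<sigma> y) \<and> (\<forall>x y. \<sigma> (x * y) = \<sigma> x * \<sigma> y)"

definition root_set :: "'a::field poly \<Rightarrow> 'a set" where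
  "root_set f = {x. poly f x = 0}"

text \<open>Galois group of f over K, as the group of permutations of the roots of f induced by
  the automorphisms of K_a fixing K pointwise (extended by the identity off the roots).\<close>
definition gal_group :: "'a::field set \<Rightarrow> 'a poly \<Rightarrow> ('a \<Rightarrow> 'a) set" where
  "gal_group K f = {(\<lambda>x. if x \<in> root_set f then \<sigma> x else x) | \<sigma>.
                      field_aut \<sigma> \<and> (\<forall>c\<in>K. \<sigma> c = c)}"

text \<open>Points of P^2(K_a) are given by nonzero representative triples (x,y,z).\<close>
definition on_line :: "'a::field \<times> 'a \<times> 'a \<Rightarrow> 'a \<times> 'a \<times> 'a \<Rightarrow> bool" where
  "on_line l p = (case l of (a, b, c) \<Rightarrow> case p of (x, y, z) \<Rightarrow> a * x + b * y + c * z = 0)"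

definition on_conic :: "'a::field \<times> 'a \<times> 'a \<times> 'a \<times> 'a \<times> 'a \<Rightarrow> 'a \<times> 'a \<times> 'a \<Rightarrow> bool" where
  "on_conic q p = (case q of (c1, c2, c3, c4, c5, c6) \<Rightarrow> case p of (x, y, z) \<Rightarrow>
      c1 * x^2 + c2 * y^2 + c3 * z^2 + c4 * x * y + c5 * x * z + c6 * y * z = 0)"

text \<open>General position for a set B of representatives of pairwise distinct projective points:
  no three on a line, no six on a conic.\<close>
definition in_general_position :: "('a::field \<times> 'a \<times> 'a) set \<Rightarrow> bool" where
  "in_general_position B \<longleftrightarrow>
     (\<forall>S\<subseteq>B. card S = 3 \<longrightarrow> \<not> (\<exists>l. l \<noteq> (0,0,0) \<and> (\<forall>p\<in>S. on_line l p))) \<and>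
     (\<forall>S\<subseteq>B. card S = 6 \<longrightarrow> \<not> (\<exists>q. q \<noteq> (0,0,0,0,0,0) \<and> (\<forall>p\<in>S. on_conic q p)))"

end

theory Submission
  imports Defs
begin


lemma prod_lin:
  fixes S :: "'a::field set"
  assumes "finite S"
  shows "degree (\<Prod>s\<in>S. [:-s,1:]) \<le> card S \<and> coeff (\<Prod>s\<in>S. [:-s,1:]) (card S) = 1 \<and>
    (S \<noteq> {} \<longrightarrow> coeff (\<Prod>s\<in>S. [:-s,1:]) (card S - 1) = - sum id S)"
  using assms
proof (induction S rule: finite_induct)
  case empty
  then show ?case by simp
next
  case (insert x F)
  define P where "P = (\<Prod>s\<in>F. [:-s,1:])"
  have eq: "(\<Prod>s\<in>insert x F. [:-s,1:]) = smult (-x) P + pCons 0 P"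
    using insert by (simp add: P_def)
  have dP: "degree P \<le> card F" using insert P_def by simp
  have c1: "coeff P (card F) = 1" using insert P_def by simp
  have z: "coeff P (Suc (card F)) = 0" using dP by (simp add: coeff_eq_0)
  have d: "degree (smult (-x) P + pCons 0 P) \<le> Suc (card F)"
    by (rule degree_add_le) (use dP in \<open>auto intro: le_trans[OF degree_smult_le] simp: degree_pCons_le\<close>)
  show ?case
  proof (intro conjI impI)
    show "degree (\<Prod>s\<in>insert x F. [:-s,1:]) \<le> card (insert x F)"
      using d insert eq by simp
    show "coeff (\<Prod>s\<in>insert x F. [:-s,1:]) (card (insert x F)) = 1"
      using insert eq z c1 by simp
    show "coeff (\<Prod>s\<in>insert x F. [:-s,1:]) (card (insert x F) - 1) = - sum id (insert x F)"
    proof (cases "F = {}")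
      case True
      then show ?thesis using eq by (simp add: P_def)
    next
      case False
      then obtain m where m: "card F = Suc m" using insert card_0_eq not0_implies_Suc by blast
      have "coeff P m = - sum id F" using insert False m P_def by simp
      then show ?thesis using eq insert m c1 by simp
    qed
  qed
qed

lemma roots_prod:
  fixes S :: "'a::field set"
  assumes "finite S"
  shows "(\<forall>s\<in>S. poly g s = 0) \<Longrightarrow> degree g \<le> card S \<Longrightarrow>
     g = smult (coeff g (card S)) (\<Prod>s\<in>S. [:-s,1:])"
  using assms
proof (induction S arbitrary: g rule: finite_induct)
  case empty
  then show ?case by (auto elim!: degree_eq_zeroE)
next
  case (insert x F)
  from insert.prems(1) have "poly g x = 0" by simp
  then obtain q where q: "g = [:-x,1:] * q" using poly_eq_0_iff_dvd by (metis dvdE)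
  have rq: "\<forall>s\<in>F. poly q s = 0"
  proof
    fix s assume "s \<in> F"
    then have "poly g s = 0" "s \<noteq> x" using insert by auto
    then show "poly q s = 0" using q by simp
  qed
  have dq: "degree q \<le> card F"
  proof (cases "q = 0")
    case False
    then have "degree g = Suc (degree q)" using q by (subst q, subst degree_mult_eq) auto
    then show ?thesis using insert by simp
  qed simp
  have IH: "q = smult (coeff q (card F)) (\<Prod>s\<in>F. [:-s,1:])" using insert.IH rq dq by blast
  have z: "coeff q (Suc (card F)) = 0" using dq by (simp add: coeff_eq_0)
  have cg: "coeff g (card (insert x F)) = coeff q (card F)"
    using insert z by (simp add: q)
  have "g = [:-x,1:] * smult (coeff q (card F)) (\<Prod>s\<in>F. [:-s,1:])" using q IH by metis
  also have "\<dots> = smult (coeff q (card F)) (\<Prod>s\<in>insert x F. [:-s,1:])"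
    using insert by (simp add: mult_smult_right)
  finally show ?case unfolding cg .
qed

lemma line_sum:
  fixes a b c x y z :: "'a::field"
  assumes "(a,b,c) \<noteq> (0,0,0)" "x \<noteq> y" "y \<noteq> z" "x \<noteq> z"
    "a*x^3 + b*x + c = 0" "a*y^3 + b*y + c = 0" "a*z^3 + b*z + c = 0"
  shows "x + y + z = 0"
proof -
  have i1: "a*x^3 + b*x + c - (a*y^3+b*y+c) = (x-y)*(a*(x^2+x*y+y^2)+b)"
    by (simp add: power2_eq_square power3_eq_cube algebra_simps)
  have i2: "a*x^3 + b*x + c - (a*z^3+b*z+c) = (x-z)*(a*(x^2+x*z+z^2)+b)"
    by (simp add: power2_eq_square power3_eq_cube algebra_simps)
  have "(x - y) * (a*(x^2+x*y+y^2) + b) = 0" using assms(5,6) i1 by simp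
  then have e1: "a*(x^2+x*y+y^2) + b = 0" using assms(2) by simp
  have "(x - z) * (a*(x^2+x*z+z^2) + b) = 0" using assms(5,7) i2 by simp
  then have e2: "a*(x^2+x*z+z^2) + b = 0" using assms(4) by simp
  have i3: "a*(x^2+x*y+y^2) + b - (a*(x^2+x*z+z^2) + b) = a * (y - z) * (x + y + z)"
    by (simp add: power2_eq_square algebra_simps)
  have "a * (y - z) * (x + y + z) = 0" using e1 e2 i3 by simp
  then have "a = 0 \<or> x + y + z = 0" using assms(3) by simp
  moreover have "a \<noteq> 0"
  proof
    assume "a = 0"
    then have "b = 0" using e1 by simp
    then have "c = 0" using assms(5) \<open>a = 0\<close> by simp
    then show False using assms(1) \<open>a = 0\<close> \<open>b = 0\<close> by simp
  qed
  ultimately show ?thesis by simp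
qed



lemma card_roots:
  fixes f :: "'a::alg_closed_field poly"
  assumes "f \<noteq> 0" "separable_poly f"
  shows "finite (root_set f) \<and> card (root_set f) = degree f"
proof -
  obtain A where A: "size A = degree f" "f = smult (lead_coeff f) (\<Prod>x\<in>#A. [:-x, 1:])"
    using alg_closed_imp_factorization[OF assms(1)] by blast
  have lc: "lead_coeff f \<noteq> 0" using assms(1) by simp
  have rs: "root_set f = set_mset A"
  proof -
    have "poly f y = 0 \<longleftrightarrow> y \<in># A" for y
      using lc by (subst A(2)) (auto simp: poly_prod_mset image_iff)
    then show ?thesis by (auto simp: root_set_def)
  qed
  have dist: "count A x \<le> 1" for x
  proof (rule ccontr)
    assume "\<not> count A x \<le> 1"
    then have "x \<in># A" by (metis count_eq_zero_iff not_le zero_le)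
    then obtain A' where A': "A = add_mset x A'" using multi_member_split by metis
    then have "x \<in># A'" using \<open>\<not> count A x \<le> 1\<close> by (metis count_add_mset count_eq_zero_iff le_SucI order_refl One_nat_def)
    then obtain B where B: "A' = add_mset x B" using multi_member_split by metis
    define P where "P = (\<Prod>x\<in>#B. [:-x, 1:])"
    have feq: "f = smult (lead_coeff f) ([:-x,1:] * ([:-x,1:] * P))"
      using A(2) A' B P_def by (simp add: mult.assoc)
    have p1: "poly f x = 0" by (subst feq) simp
    have p2: "poly (pderiv f) x = 0" by (subst feq, simp only: pderiv_smult pderiv_mult poly_smult poly_add poly_mult) simp
    have "is_unit [:-x,1:]"
      using coprime_common_divisor[of f "pderiv f" "[:-x,1:]"] assms(2) p1 p2
      by (simp add: separable_poly_def poly_eq_0_iff_dvd)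
    then show False by (simp add: is_unit_iff_degree)
  qed
  have "A = mset_set (set_mset A)"
  proof (rule multiset_eqI)
    fix y show "count A y = count (mset_set (set_mset A)) y"
      proof (cases "y \<in># A")
      case True
      then have "count A y \<noteq> 0" by simp
      then have "count A y = 1" using dist[of y] by linarith
      then show ?thesis using True by (simp add: count_mset_set)
    qed (simp add: count_mset_set not_in_iff)
  qed
  then have "card (set_mset A) = size A" by (metis size_mset_set)
  then show ?thesis using rs A(1) by simp
qed

lemma conic_sum:
  fixes T :: "'a::field set"
  assumes "finite T" "card T = 6" "q \<noteq> (0,0,0,0,0,0)"
    "\<forall>x\<in>T. on_conic q (x^3, x, 1)"
  shows "sum id T = 0"
proof -
  obtain c1 c2 c3 c4 c5 c6 where q: "q = (c1,c2,c3,c4,c5,c6)" by (cases q) auto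
  define g where "g = [:c3, c6, c2, c5, c4, 0, c1:]"
  have pg: "poly g x = c1 * (x^3)^2 + c2 * x^2 + c3 * 1^2 + c4 * x^3 * x + c5 * x^3 * 1 + c6 * x * 1" for x
    by (simp add: g_def algebra_simps power2_eq_square power3_eq_cube)
  have roots: "\<forall>s\<in>T. poly g s = 0" using assms(4) by (simp add: pg on_conic_def q)
  have dg: "degree g \<le> 6" unfolding g_def
    by (rule degree_le) (simp add: coeff_pCons split: nat.split)
  have geq: "g = smult (coeff g 6) (\<Prod>s\<in>T. [:-s,1:])"
    using roots_prod[OF assms(1) roots] dg assms(2) by simp
  have pl: "coeff (\<Prod>s\<in>T. [:-s,1:]) 5 = - sum id T"
    using prod_lin[OF assms(1)] assms(2) by auto
  have c6: "coeff g 6 = c1" "coeff g 5 = 0" by (simp_all add: g_def numeral_eq_Suc)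
  have "c1 \<noteq> 0"
  proof
    assume "c1 = 0"
    then have "g = 0" using geq c6 by simp
    then show False using assms(3) q by (simp add: g_def)
  qed
  moreover have "coeff g 5 = c1 * (- sum id T)" using geq c6 pl
    by (metis coeff_smult)
  ultimately show ?thesis using c6 by simp
qed



lemma gal_elem:
  assumes "gal_group K f = {p. p permutes root_set f}
         \<or> gal_group K f = {p. p permutes root_set f \<and> evenperm p}"
    and "p permutes root_set f" "evenperm p"
  shows "\<exists>\<sigma>. field_aut \<sigma> \<and> (\<forall>x\<in>root_set f. \<sigma> x = p x)"
proof -
  have "p \<in> gal_group K f" using assms by auto
  then obtain \<sigma> where "p = (\<lambda>x. if x \<in> root_set f then \<sigma> x else x)" "field_aut \<sigma>"
    unfolding gal_group_def by blast
  then show ?thesis by auto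
qed

lemma aut_zero: "field_aut \<sigma> \<Longrightarrow> \<sigma> 0 = 0"
  unfolding field_aut_def by (metis add.right_neutral add_left_cancel)

lemma two_swaps:
  assumes "a \<in> R" "b \<in> R" "c \<in> R" "d \<in> R" "a \<noteq> b" "c \<noteq> d"
  shows "(transpose a b \<circ> transpose c d) permutes R \<and> evenperm (transpose a b \<circ> transpose c d)"
  using assms by (simp add: permutes_compose permutes_swap_id evenperm_comp permutation_swap_id evenperm_swap)

lemma two_elems:
  assumes "card A \<ge> 2" obtains u v where "u \<in> A" "v \<in> A" "u \<noteq> v"
proof -
  have "finite A" using assms card.infinite by fastforce
  have "A \<noteq> {}" using assms by auto
  then obtain u where u: "u \<in> A" by blast
  have "card (A - {u}) \<ge> 1" using assms u \<open>finite A\<close> by simp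
  then obtain v where "v \<in> A - {u}" by (metis card.empty ex_in_conv not_one_le_zero)
  then show ?thesis using u that by blast
qed



theorem lemma1p3:
  fixes K :: "'a::alg_closed_field set" and f :: "'a poly"
  assumes "is_subfield K" and "algebraic_over K"
    and "perfect_subfield K" and "CHAR('a) \<noteq> 2"
    and "poly_over K f" and "separable_poly f" and "irreducible_over K f"
    and "degree f = 7"
    and "gal_group K f = {p. p permutes root_set f}
         \<or> gal_group K f = {p. p permutes root_set f \<and> evenperm p}"
  shows "in_general_position ((\<lambda>\<alpha>. (\<alpha>^3, \<alpha>, 1)) ` root_set f)"
proof -
  define R where "R = root_set f"
  have f0: "f \<noteq> 0" using assms(8) by auto
  have fin: "finite R" and cR: "card R = 7"
    using card_roots[OF f0 assms(6)] assms(8) R_def by auto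
  define h where "h = (\<lambda>\<alpha>::'a. (\<alpha>^3, \<alpha>, (1::'a)))"
  have injh: "inj h" unfolding h_def by (rule injI) simp
  have gal: "\<exists>\<sigma>. field_aut \<sigma> \<and> (\<forall>x\<in>R. \<sigma> x = p x)" if "p permutes R" "evenperm p" for p
    using gal_elem[OF assms(9)] that R_def by blast
  have sub: "\<exists>T. T \<subseteq> R \<and> S = h ` T \<and> card T = card S" if "S \<subseteq> h ` R" for S
  proof -
    define T where "T = R \<inter> h -` S"
    have "S = h ` T" using that T_def by auto
    moreover have "card S = card T" using \<open>S = h ` T\<close> injh by (simp add: card_image inj_on_subset)
    ultimately show ?thesis unfolding T_def by auto
  qed
  show ?thesis
    unfolding in_general_position_def R_def[symmetric] h_def[symmetric]
  proof (intro conjI allI impI notI)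
    fix S assume S: "S \<subseteq> h ` R" "card S = 3"
      and ex: "\<exists>l. l \<noteq> (0,0,0) \<and> (\<forall>p\<in>S. on_line l p)"
    obtain T where T: "T \<subseteq> R" "S = h ` T" "card T = 3" using sub[OF S(1)] S(2) by auto
    then obtain x y z where xyz: "T = {x,y,z}" "x \<noteq> y" "y \<noteq> z" "x \<noteq> z"
      by (auto simp: card_3_iff)
    obtain a b c where l: "(a,b,c) \<noteq> (0,0,0)" "\<forall>p\<in>S. on_line (a,b,c) p" using ex by auto
    have "a*t^3 + b*t + c = 0" if "t \<in> T" for t
      using l(2) T(2) that by (auto simp: on_line_def h_def)
    then have sum0: "x + y + z = 0"
      using line_sum[OF l(1) xyz(2-4)] xyz(1) by auto
    have xyzR: "x \<in> R" "y \<in> R" "z \<in> R" using T xyz by auto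
    have "card (R - {x,y,z}) = 4" using fin cR xyzR xyz by (simp add: card_Diff_subset)
    then obtain d where d: "d \<in> R - {x,y,z}" by (metis card.empty ex_in_conv zero_neq_numeral)
    have "card {x,y,z,d} = 4" using xyz d by auto
    then have "card (R - {x,y,z,d}) = 3" using fin cR xyzR xyz d by (simp add: card_Diff_subset)
    then obtain e e' where ee: "e \<in> R - {x,y,z,d}" "e' \<in> R - {x,y,z,d}" "e \<noteq> e'"
      using two_elems[of "R - {x,y,z,d}"] by auto
    define p where "p = transpose z d \<circ> transpose e e'"
    have "p permutes R \<and> evenperm p" unfolding p_def
      using two_swaps[of z R d e e'] xyzR d ee by auto
    then obtain \<sigma> where \<sigma>: "field_aut \<sigma>" "\<forall>t\<in>R. \<sigma> t = p t" using gal by blast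
    have px: "p x = x" "p y = y" "p z = d" using d ee xyz unfolding p_def by auto
    have "\<sigma> (x + y + z) = \<sigma> x + \<sigma> y + \<sigma> z" using \<sigma>(1) unfolding field_aut_def by simp
    also have "\<dots> = x + y + d" using \<sigma>(2) xyzR px by simp
    finally have "x + y + d = 0" using sum0 aut_zero[OF \<sigma>(1)] by simp
    then have "x + y + d = x + y + z" using sum0 by simp
    then have "d = z" by simp
    then show False using d by simp
  next
    fix S assume S: "S \<subseteq> h ` R" "card S = 6"
      and ex: "\<exists>q. q \<noteq> (0,0,0,0,0,0) \<and> (\<forall>p\<in>S. on_conic q p)"
    obtain T where T: "T \<subseteq> R" "S = h ` T" "card T = 6" using sub[OF S(1)] S(2) by auto
    have finT: "finite T" using T(1) fin finite_subset by blast
    obtain q where q: "q \<noteq> (0,0,0,0,0,0)" "\<forall>p\<in>S. on_conic q p" using ex by blast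
    have "\<forall>x\<in>T. on_conic q (x^3, x, 1)" using q(2) T(2) by (auto simp: h_def)
    then have sT: "sum id T = 0" using conic_sum[OF finT T(3) q(1)] by blast
    have "card (R - T) = 1" using fin cR T by (simp add: card_Diff_subset finT)
    then obtain \<beta> where \<beta>: "R - T = {\<beta>}" by (rule card_1_singletonE)
    have sR: "sum id R = \<beta>" using sum.subset_diff[OF T(1) fin, of id] \<beta> sT by simp
    obtain \<gamma> where \<gamma>: "\<gamma> \<in> T" using T(3) by fastforce
    have "card (T - {\<gamma>}) = 5" using T(3) \<gamma> finT by simp
    then obtain e e' where ee: "e \<in> T - {\<gamma>}" "e' \<in> T - {\<gamma>}" "e \<noteq> e'"
      using two_elems[of "T - {\<gamma>}"] by auto
    have \<beta>R: "\<beta> \<in> R" "\<beta> \<notin> T" using \<beta> by auto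
    define p where "p = transpose \<beta> \<gamma> \<circ> transpose e e'"
    have pp: "p permutes R \<and> evenperm p" unfolding p_def
      using two_swaps[of \<beta> R \<gamma> e e'] \<beta>R \<gamma> ee T(1) by auto
    then obtain \<sigma> where \<sigma>: "field_aut \<sigma>" "\<forall>t\<in>R. \<sigma> t = p t" using gal by blast
    have ne: "\<beta> \<noteq> e" "\<beta> \<noteq> e'" using ee \<beta>R by auto
    have pb: "p \<beta> = \<gamma>" using ne unfolding p_def by (simp add: transpose_def)
    have "\<sigma> (sum id R) = sum (\<sigma> \<circ> id) R"
      by (rule sum_comp_morphism[symmetric]) (use \<sigma>(1) aut_zero in \<open>auto simp: field_aut_def\<close>)
    also have "\<dots> = sum (\<lambda>x. id (p x)) R" using \<sigma>(2) by (intro sum.cong) auto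
    also have "\<dots> = sum id R" using permutes_imp_bij[OF pp[THEN conjunct1]] by (rule sum.reindex_bij_betw)
    finally have "\<sigma> \<beta> = \<beta>" using sR by simp
    moreover have "\<sigma> \<beta> = \<gamma>" using \<sigma>(2) \<beta>R pb by simp
    ultimately show False using \<gamma> \<beta>R by simp
  qed
qed

end
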